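(* Let $G\subset GL(V)$ be a reflection group and fix $g\in G$. If $\ell(a)=\operatorname{codim}(a)$ for every codimension atom $a$ with $a\le_\perp g$, then $\ell(g)=\operatorname{codim}(g)$.
   Context: $V$ is a finite-dimensional vector space of dimension $n$ over $\mathbb{R}$ or $\mathbb{C}$. A reflection is an element of $GL(V)$ of finite order fixing a hyperplane pointwise; a reflection group is a finite subgroup of $GL(V)$ generated by reflections. $\ell(g)$ is the minimal number of reflections of $G$ whose product is $g$ ($\ell(1)=0$). $\operatorname{codim}(g)=n-\dim\{v\in V:gv=v\}$. The codimension order is the partial order on $G$ given by $a\le_\perp c$ iff $\operatorname{codim}(a)+\operatorname{codim}(a^{-1}c)=\operatorname{codim}(c)$. A codimension atom is an element covering the identity in this poset, i.e. $a\ne 1$ such that there is no $x$ with $1<_\perp x<_\perp a$. *)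

theory Defs
  imports "HOL-Analysis.Analysis"
begin

text \<open>V = complex^'n (dimension n = CARD('n)); elements of GL(V) are invertible
 n x n complex matrices acting by (*v). A real reflection group is the special case
 of a group of real matrices.\<close>

type_synonym 'n cmat = "complex ^'n ^'n"

definition fixed_space :: "'n::finite cmat \<Rightarrow> (complex ^'n) set" where
  "fixed_space g = {v. g *v v = v}"

definition codim :: "'n::finite cmat \<Rightarrow> nat" where
  "codim g = CARD('n) - vec.dim (fixed_space g)"

definition has_finite_order :: "'n::finite cmat \<Rightarrow> bool" where
  "has_finite_order g \<longleftrightarrow> (\<exists>k>0. ((\<lambda>x. g ** x) ^^ k) (mat 1) = mat 1)"

definition is_reflection :: "'n::finite cmat \<Rightarrow> bool" where
  "is_reflection g \<longleftrightarrow> invertible g \<and> has_finite_order g \<and> g \<noteq> mat 1 \<and>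
     (\<exists>H. vec.subspace H \<and> vec.dim H + 1 = CARD('n) \<and> (\<forall>v\<in>H. g *v v = v))"

inductive_set gen_group :: "'n::finite cmat set \<Rightarrow> 'n cmat set" for S where
  gen_one: "mat 1 \<in> gen_group S"
| gen_base: "s \<in> S \<Longrightarrow> s \<in> gen_group S"
| gen_mult: "a \<in> gen_group S \<Longrightarrow> b \<in> gen_group S \<Longrightarrow> a ** b \<in> gen_group S"
| gen_inv: "a \<in> gen_group S \<Longrightarrow> matrix_inv a \<in> gen_group S"

definition reflections_of :: "'n::finite cmat set \<Rightarrow> 'n cmat set" where
  "reflections_of G = {r \<in> G. is_reflection r}"

definition reflection_group :: "'n::finite cmat set \<Rightarrow> bool" where
  "reflection_group G \<longleftrightarrow> finite G \<and> (\<forall>g\<in>G. invertible g) \<and>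
     G = gen_group (reflections_of G)"

definition prod_list_mat :: "'n::finite cmat list \<Rightarrow> 'n cmat" where
  "prod_list_mat rs = foldr (\<lambda>a b. a ** b) rs (mat 1)"

definition refl_length :: "'n::finite cmat set \<Rightarrow> 'n cmat \<Rightarrow> nat" where
  "refl_length G g = (LEAST k. \<exists>rs. length rs = k \<and> set rs \<subseteq> reflections_of G \<and> prod_list_mat rs = g)"

definition codim_le :: "'n::finite cmat \<Rightarrow> 'n cmat \<Rightarrow> bool" where
  "codim_le a c \<longleftrightarrow> codim a + codim (matrix_inv a ** c) = codim c"

definition codim_less :: "'n::finite cmat \<Rightarrow> 'n cmat \<Rightarrow> bool" where
  "codim_less a c \<longleftrightarrow> codim_le a c \<and> a \<noteq> c"

definition codim_atom :: "'n::finite cmat set \<Rightarrow> 'n cmat \<Rightarrow> bool" where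
  "codim_atom G a \<longleftrightarrow> a \<in> G \<and> codim_less (mat 1) a \<and>
     \<not> (\<exists>x\<in>G. codim_less (mat 1) x \<and> codim_less x a)"

end

theory Submission
  imports Defs
begin

lemma inv_props:
  fixes A :: "'n::finite cmat"
  assumes "invertible A"
  shows "A ** matrix_inv A = mat 1 \<and> matrix_inv A ** A = mat 1"
  using assms unfolding invertible_def matrix_inv_def by (rule someI_ex)

lemma inv_unique:
  fixes A B :: "'n::finite cmat"
  assumes "A ** B = mat 1"
  shows "matrix_inv A = B"
proof -
  have "invertible A" using assms invertible_right_inverse by blast
  then have "matrix_inv A ** A = mat 1" using inv_props by blast
  then have "matrix_inv A = matrix_inv A ** (A ** B)" using assms by simp
  also have "\<dots> = B" using \<open>matrix_inv A ** A = mat 1\<close> by (simp add: matrix_mul_assoc)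
  finally show ?thesis .
qed

lemma fixed_subspace: "vec.subspace (fixed_space (g::'n::finite cmat))"
  unfolding vec.subspace_def fixed_space_def
  by (auto simp: matrix_vector_right_distrib vec.scale)

lemma dim_fix_le: "vec.dim (fixed_space (g::'n::finite cmat)) \<le> CARD('n)"
  by (rule dim_subset_UNIV_cart_gen)

lemma codim_mult: "codim ((x::'n::finite cmat) ** y) \<le> codim x + codim y"
proof -
  let ?S = "fixed_space x" and ?T = "fixed_space y"
  have "?S \<inter> ?T \<subseteq> fixed_space (x ** y)"
    by (auto simp: fixed_space_def matrix_vector_mul_assoc[symmetric])
  then have a: "vec.dim (?S \<inter> ?T) \<le> vec.dim (fixed_space (x ** y))" by (rule vec.dim_subset)
  have b: "vec.dim {a + b |a b. a \<in> ?S \<and> b \<in> ?T} + vec.dim (?S \<inter> ?T) = vec.dim ?S + vec.dim ?T"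
    using vec.dim_sums_Int fixed_subspace by blast
  have c: "vec.dim {a + b |a b. a \<in> ?S \<and> b \<in> ?T} \<le> CARD('n)" by (rule dim_subset_UNIV_cart_gen)
  show ?thesis unfolding codim_def using a b c dim_fix_le[of x] dim_fix_le[of y] dim_fix_le[of "x**y"] by linarith
qed

lemma codim_one: "codim (mat 1 :: 'n::finite cmat) = 0"
proof -
  have "fixed_space (mat 1 :: 'n cmat) = UNIV" by (simp add: fixed_space_def)
  moreover have "vec.dim (UNIV::(complex^'n) set) = CARD('n)" by (rule vec_dim_card)
  ultimately show ?thesis by (simp add: codim_def del: vec.dim_UNIV)
qed

lemma codim_zero: assumes "codim (g::'n::finite cmat) = 0" shows "g = mat 1"
proof -
  have "vec.dim (fixed_space g) = CARD('n)" using assms dim_fix_le[of g] unfolding codim_def by linarith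
  then have "vec.span (fixed_space g) = UNIV"
    using vec.dim_eq_full vec_dim_card[where 'a=complex and 'n='n] vec.dimension_def vec.dim_UNIV by metis
  then have "fixed_space g = UNIV" using fixed_subspace vec.span_eq_iff by metis
  then show ?thesis by (auto simp: fixed_space_def matrix_eq)
qed

lemma codim_conj:
  fixes a p :: "'n::finite cmat"
  assumes "invertible p"
  shows "codim (matrix_inv p ** a ** p) = codim a"
proof -
  have ip: "p ** matrix_inv p = mat 1" "matrix_inv p ** p = mat 1" using inv_props assms by auto
  have "fixed_space (matrix_inv p ** a ** p) = (\<lambda>v. matrix_inv p *v v) ` fixed_space a"
  proof (intro set_eqI iffI)
    fix v assume "v \<in> fixed_space (matrix_inv p ** a ** p)"
    then have "matrix_inv p *v (a *v (p *v v)) = v" by (simp add: fixed_space_def matrix_vector_mul_assoc matrix_mul_assoc)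
    then have "p *v (matrix_inv p *v (a *v (p *v v))) = p *v v" by simp
    then have "a *v (p *v v) = p *v v" using ip by (simp add: matrix_vector_mul_assoc matrix_mul_assoc)
    moreover have "v = matrix_inv p *v (p *v v)" using ip by (simp add: matrix_vector_mul_assoc)
    ultimately show "v \<in> (\<lambda>v. matrix_inv p *v v) ` fixed_space a" by (auto simp: fixed_space_def)
  next
    fix v assume "v \<in> (\<lambda>v. matrix_inv p *v v) ` fixed_space a"
    then obtain w where w: "a *v w = w" "v = matrix_inv p *v w" by (auto simp: fixed_space_def)
    have "p *v v = w" using w ip by (simp add: matrix_vector_mul_assoc)
    then show "v \<in> fixed_space (matrix_inv p ** a ** p)"
      using w by (simp add: fixed_space_def matrix_vector_mul_assoc[symmetric])
  qed
  moreover have "inj ((*v) (matrix_inv p))"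
    by (rule inj_matrix_vector_mult) (metis invertible_def ip)
  ultimately have "vec.dim (fixed_space (matrix_inv p ** a ** p)) = vec.dim (fixed_space a)"
    using vec.dim_image_eq[OF matrix_vector_mul_linear_gen] by (metis inj_on_subset subset_UNIV)
  then show ?thesis by (simp add: codim_def)
qed

lemma codim_refl: assumes "is_reflection (r::'n::finite cmat)" shows "codim r \<le> 1"
proof -
  obtain H where H: "vec.dim H + 1 = CARD('n)" "\<forall>v\<in>H. r *v v = v"
    using assms unfolding is_reflection_def by blast
  then have "H \<subseteq> fixed_space r" by (auto simp: fixed_space_def)
  then have "vec.dim H \<le> vec.dim (fixed_space r)" by (rule vec.dim_subset)
  then show ?thesis using H unfolding codim_def by linarith
qed

lemma prod_append: "prod_list_mat (xs @ ys) = prod_list_mat xs ** prod_list_mat (ys::'n::finite cmat list)"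
  by (induction xs) (auto simp: prod_list_mat_def matrix_mul_assoc)

lemma prod_nil: "prod_list_mat [] = (mat 1 :: 'n::finite cmat)"
  by (simp add: prod_list_mat_def)

lemma prod_cons: "prod_list_mat (x # xs) = x ** prod_list_mat (xs :: 'n::finite cmat list)"
  by (simp add: prod_list_mat_def)

lemma codim_prod: "set rs \<subseteq> reflections_of G \<Longrightarrow> codim (prod_list_mat rs) \<le> length (rs :: 'n::finite cmat list)"
proof (induction rs)
  case Nil then show ?case by (simp add: prod_nil codim_one)
next
  case (Cons r rs)
  then have "codim r \<le> 1" using codim_refl by (auto simp: reflections_of_def)
  then show ?case using Cons codim_mult[of r "prod_list_mat rs"] by (simp add: prod_cons)
qed

lemma G_one: "reflection_group G \<Longrightarrow> mat 1 \<in> G"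
  unfolding reflection_group_def by (metis gen_group.gen_one)
lemma G_mult: "reflection_group G \<Longrightarrow> a \<in> G \<Longrightarrow> b \<in> G \<Longrightarrow> a ** b \<in> G"
  unfolding reflection_group_def by (metis gen_group.gen_mult)
lemma G_inv: "reflection_group G \<Longrightarrow> a \<in> G \<Longrightarrow> matrix_inv a \<in> G"
  unfolding reflection_group_def by (metis gen_group.gen_inv)
lemma G_invertible: "reflection_group G \<Longrightarrow> a \<in> G \<Longrightarrow> invertible a"
  unfolding reflection_group_def by blast

lemma prod_rep_G: "reflection_group G \<Longrightarrow> a \<in> G \<Longrightarrow> prod_list_mat (replicate k a) \<in> G"
  by (induction k) (auto simp: prod_nil prod_cons G_one G_mult)

lemma prod_concat_rep: "prod_list_mat (concat (replicate k rs)) = prod_list_mat (replicate k (prod_list_mat (rs::'n::finite cmat list)))"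
  by (induction k) (auto simp: prod_nil prod_cons prod_append)

lemma finite_order:
  assumes "reflection_group G" "a \<in> G"
  shows "\<exists>m>0. prod_list_mat (replicate m a) = mat 1"
proof -
  let ?f = "\<lambda>k. prod_list_mat (replicate k a)"
  have "?f ` UNIV \<subseteq> G" using prod_rep_G assms by blast
  moreover have "finite G" using assms by (simp add: reflection_group_def)
  ultimately have "\<not> inj ?f" using finite_imageD finite_subset infinite_UNIV_nat by blast
  then obtain i j where ij: "i \<noteq> j" "?f i = ?f j" unfolding inj_def by blast
  then obtain i j where ij: "i < j" "?f i = ?f j" by (metis linorder_neq_iff)
  have "replicate j a = replicate i a @ replicate (j - i) a" using ij(1) by (metis le_add_diff_inverse less_imp_le replicate_add)
  then have eq: "?f i = ?f i ** ?f (j - i)" using ij(2) by (simp add: prod_append)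
  have "invertible (?f i)" using G_invertible prod_rep_G assms by blast
  then have "matrix_inv (?f i) ** ?f i = mat 1" using inv_props by blast
  then have "mat 1 = matrix_inv (?f i) ** (?f i ** ?f (j - i))" using eq by metis
  also have "\<dots> = ?f (j - i)" using \<open>matrix_inv (?f i) ** ?f i = mat 1\<close> by (simp add: matrix_mul_assoc)
  finally show ?thesis using ij(1) by (intro exI[of _ "j - i"]) auto
qed

lemma generated:
  assumes RG: "reflection_group G" and "g \<in> G"
  shows "\<exists>rs. set rs \<subseteq> reflections_of G \<and> prod_list_mat rs = g"
proof -
  have "g \<in> gen_group (reflections_of G)" using assms by (simp add: reflection_group_def)
  then show ?thesis
  proof (induction rule: gen_group.induct)
    case gen_one then show ?case by (intro exI[of _ "[]"]) (simp add: prod_nil)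
  next
    case (gen_base s) then show ?case by (intro exI[of _ "[s]"]) (simp add: prod_cons prod_nil)
  next
    case (gen_mult a b)
    then obtain ra rb where "set ra \<subseteq> reflections_of G" "prod_list_mat ra = a"
      "set rb \<subseteq> reflections_of G" "prod_list_mat rb = b" by blast
    then show ?case by (intro exI[of _ "ra @ rb"]) (simp add: prod_append)
  next
    case (gen_inv a)
    then obtain ra where ra: "set ra \<subseteq> reflections_of G" "prod_list_mat ra = a" by blast
    have "a \<in> G" using gen_inv(1) RG by (simp add: reflection_group_def)
    then obtain m where m: "m > 0" "prod_list_mat (replicate m a) = mat 1" using finite_order RG by blast
    have "replicate m a = a # replicate (m - 1) a" using m(1) by (cases m) auto
    then have "a ** prod_list_mat (replicate (m - 1) a) = mat 1" using m(2) by (simp add: prod_cons)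
    then have "matrix_inv a = prod_list_mat (replicate (m - 1) a)" by (rule inv_unique)
    then show ?case using ra
      by (intro exI[of _ "concat (replicate (m - 1) ra)"]) (auto simp: prod_concat_rep)
  qed
qed

lemma refl_length_props:
  assumes "reflection_group G" "g \<in> G"
  shows "\<exists>rs. length rs = refl_length G g \<and> set rs \<subseteq> reflections_of G \<and> prod_list_mat rs = g"
proof -
  obtain rs where "set rs \<subseteq> reflections_of G \<and> prod_list_mat rs = g" using generated[OF assms] by blast
  then have "\<exists>rs'. length rs' = length rs \<and> set rs' \<subseteq> reflections_of G \<and> prod_list_mat rs' = g" by blast
  then show ?thesis unfolding refl_length_def by (rule LeastI)
qed

lemma refl_length_le:
  "set rs \<subseteq> reflections_of G \<Longrightarrow> prod_list_mat rs = g \<Longrightarrow> refl_length G g \<le> length rs"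
  unfolding refl_length_def by (metis (mono_tags, lifting) Least_le)

lemma codim_le_length: "reflection_group G \<Longrightarrow> g \<in> G \<Longrightarrow> codim g \<le> refl_length G g"
  using refl_length_props codim_prod by metis

lemma inv_one: "matrix_inv (mat 1 :: 'n::finite cmat) = mat 1"
  by (rule inv_unique) simp

lemma codim_le_trans:
  fixes x y g :: "'n::finite cmat"
  assumes "invertible x" "invertible y" "codim_le y x" "codim_le x g"
  shows "codim_le y g"
proof -
  have ix: "x ** matrix_inv x = mat 1" using inv_props assms(1) by blast
  have iy: "y ** matrix_inv y = mat 1" using inv_props assms(2) by blast
  have "matrix_inv y ** g = (matrix_inv y ** x) ** (matrix_inv x ** g)"
    using ix by (simp add: matrix_mul_assoc) (metis matrix_mul_assoc matrix_mul_lid)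
  then have "codim (matrix_inv y ** g) \<le> codim (matrix_inv y ** x) + codim (matrix_inv x ** g)"
    using codim_mult by metis
  moreover have "g = y ** (matrix_inv y ** g)" using iy by (simp add: matrix_mul_assoc)
  then have "codim g \<le> codim y + codim (matrix_inv y ** g)" using codim_mult by metis
  ultimately show ?thesis using assms(3,4) unfolding codim_le_def by linarith
qed

lemma atom_exists:
  assumes RG: "reflection_group G" and "g \<in> G" "g \<noteq> mat 1"
  shows "\<exists>a. codim_atom G a \<and> codim_le a g"
proof -
  let ?P = "\<lambda>x. x \<in> G \<and> x \<noteq> mat 1 \<and> codim_le x g"
  have "matrix_inv g ** g = mat 1" using inv_props G_invertible assms by blast
  then have "?P g" using assms by (simp add: codim_le_def codim_one)
  then obtain x where x: "?P x" "\<And>y. ?P y \<Longrightarrow> codim x \<le> codim y"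
    using ex_has_least_nat[of ?P g codim] by blast
  have c1: "codim_less (mat 1) z" if "z \<noteq> mat 1" for z :: "'a cmat"
    using that by (simp add: codim_less_def codim_le_def inv_one codim_one)
  have "\<not> (\<exists>y\<in>G. codim_less (mat 1) y \<and> codim_less y x)"
  proof
    assume "\<exists>y\<in>G. codim_less (mat 1) y \<and> codim_less y x"
    then obtain y where y: "y \<in> G" "y \<noteq> mat 1" "codim_le y x" "y \<noteq> x"
      by (auto simp: codim_less_def)
    have iy: "y ** matrix_inv y = mat 1" using inv_props G_invertible RG y(1) by blast
    have "matrix_inv y ** x \<noteq> mat 1"
    proof
      assume "matrix_inv y ** x = mat 1"
      then have "y ** (matrix_inv y ** x) = y" by simp
      then show False using iy y(4) by (simp add: matrix_mul_assoc)
    qed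
    then have "codim (matrix_inv y ** x) \<noteq> 0" using codim_zero by blast
    then have lt: "codim y < codim x" using y(3) unfolding codim_le_def by linarith
    have "codim_le y g" using codim_le_trans G_invertible RG x(1) y by blast
    then have "codim x \<le> codim y" using x(2) y by blast
    then show False using lt by simp
  qed
  then have "codim_atom G x" using x(1) c1 by (simp add: codim_atom_def)
  then show ?thesis using x(1) by blast
qed

lemma upper:
  assumes RG: "reflection_group G"
  shows "g \<in> G \<Longrightarrow> (\<forall>a. codim_atom G a \<and> codim_le a g \<longrightarrow> refl_length G a = codim a)
     \<Longrightarrow> refl_length G g \<le> codim g"
proof (induction "codim g" arbitrary: g rule: less_induct)
  case less
  show ?case
  proof (cases "g = mat 1")
    case True
    have "refl_length G g \<le> length ([] :: 'a cmat list)"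
      by (rule refl_length_le) (auto simp: prod_nil True)
    then show ?thesis by simp
  next
    case False
    obtain a where a: "codim_atom G a" "codim_le a g" using atom_exists RG less.prems False by blast
    have aG: "a \<in> G" using a(1) by (simp add: codim_atom_def)
    have ia: "invertible a" "a ** matrix_inv a = mat 1" "matrix_inv a ** a = mat 1"
      using G_invertible inv_props RG aG by blast+
    have ig: "invertible g" "g ** matrix_inv g = mat 1" "matrix_inv g ** g = mat 1"
      using G_invertible inv_props RG less.prems(1) by blast+
    define c where "c = matrix_inv a ** g"
    have cG: "c \<in> G" unfolding c_def using G_mult G_inv RG aG less.prems(1) by blast
    have ac: "a ** c = g" unfolding c_def using ia by (simp add: matrix_mul_assoc)
    have "a \<noteq> mat 1" using a(1) unfolding codim_atom_def codim_less_def by metis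
    then have "codim a \<noteq> 0" using codim_zero by blast
    then have lt: "codim c < codim g" using a(2) unfolding codim_le_def c_def by linarith
    have "c ** (matrix_inv g ** a) = mat 1" unfolding c_def using ig ia
      by (simp add: matrix_mul_assoc) (metis matrix_mul_assoc matrix_mul_lid)
    then have "matrix_inv c = matrix_inv g ** a" by (rule inv_unique)
    then have "codim (matrix_inv c ** g) = codim a"
      using codim_conj[OF ig(1), of a] by (simp add: matrix_mul_assoc)
    then have cg: "codim_le c g" using a(2) unfolding codim_le_def c_def by simp
    have hyp: "\<forall>b. codim_atom G b \<and> codim_le b c \<longrightarrow> refl_length G b = codim b"
    proof (intro allI impI)
      fix b assume b: "codim_atom G b \<and> codim_le b c"
      then have "b \<in> G" by (simp add: codim_atom_def)
      then have "codim_le b g" using codim_le_trans[of c b g] b cg G_invertible RG cG by blast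
      then show "refl_length G b = codim b" using less.prems(2) b by blast
    qed
    have lc: "refl_length G c \<le> codim c" using less.hyps[OF lt cG hyp] .
    obtain ra where ra: "length ra = refl_length G a" "set ra \<subseteq> reflections_of G" "prod_list_mat ra = a"
      using refl_length_props RG aG by blast
    obtain rc where rc: "length rc = refl_length G c" "set rc \<subseteq> reflections_of G" "prod_list_mat rc = c"
      using refl_length_props RG cG by blast
    have "refl_length G g \<le> length (ra @ rc)"
      by (rule refl_length_le) (use ra rc ac in \<open>auto simp: prod_append\<close>)
    moreover have "refl_length G a = codim a" using less.prems(2) a by blast
    ultimately show ?thesis using ra(1) rc(1) lc a(2) unfolding codim_le_def c_def by simp
  qed
qed

theorem mainTheorem2:
  fixes G :: "('n::finite) cmat set" and g :: "'n cmat"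
  assumes "reflection_group G"
    and "g \<in> G"
    and "\<forall>a. codim_atom G a \<and> codim_le a g \<longrightarrow> refl_length G a = codim a"
  shows "refl_length G g = codim g"
  using upper[OF assms(1) assms(2,3)] codim_le_length[OF assms(1,2)] by simp

end
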